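(* Let $\mu>0$, $\varepsilon>0$, and $z^0\in F$, and consider the iterates generated by Algorithm IP-FB$(z^0,\mu,\varepsilon)$ described in the context. Then: (i) at every iteration, the number of backtracking steps (reductions $\gamma_j\gets\beta\gamma_j$) is finite; (ii) at every iteration $j\geq1$, one has $z^j=\bar z^{j-1}$ and \[ q_\mu(z^j)=q_\mu(\bar z^{j-1})\leq q_\mu(z^{j-1})-\tfrac{1-\alpha}{2\gamma_{j-1}}\|\bar z^{j-1}-z^{j-1}\|^2, \] where $\gamma_{j-1}$ is the accepted stepsize of iteration $j-1$; (iii) every iterate $\bar z^j$ belongs to the sublevel set $\{z : q_\mu(z)\leq q_\mu(z^0)\}$, and $q_\mu(z^0)<\infty$.
   Context: Setting: $f:\mathbb{R}^n\to\mathbb{R}$ has locally Lipschitz continuous gradient; $g:\mathbb{R}^n\to\mathbb{R}\cup\{\infty\}$ is proper, lower semicontinuous, prox-bounded ($g+\frac{1}{2\gamma}\|\cdot\|^2$ bounded below for some $\gamma>0$; $\gamma_g\in(0,\infty]$ denotes the supremum of such $\gamma$), and continuous relative to $\operatorname{dom} g$ (whenever $\operatorname{dom} g\ni x^k\to x$, $g(x^k)\to g(x)$); $c:\mathbb{R}^n\to\mathbb{R}^m$ has locally Lipschitz continuous Jacobian. $q=f+g$, $\inf\{q(x): c(x)\le0\}\in\mathbb{R}$, $D=\{x: c(x)<0\}$, $F=\operatorname{dom} q\cap D\neq\emptyset$. The barrier $b:\mathbb{R}\to[0,\infty]$ has $\operatorname{dom} b=(-\infty,0)$, is twice continuously differentiable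 with $b'>0$ there, and $b(t)\to\infty$ as $t\to0^-$. For $\mu>0$: $f_\mu(z)=f(z)+\mu\sum_{i=1}^m b(c_i(z))$ ($=\infty$ outside $D$), $q_\mu=f_\mu+g$. $\operatorname{prox}_{\gamma g}(x)=\operatorname{argmin}_w\{g(w)+\frac{1}{2\gamma}\|w-x\|^2\}$, and $T_{\mu,\gamma}(z)=\operatorname{prox}_{\gamma g}(z-\gamma\nabla f_\mu(z))$ for $z\in D$. Algorithm IP-FB$(z^0,\mu,\varepsilon)$: inputs $z^0\in F$, $\mu>0$, $\varepsilon>0$; parameters $\gamma_0\in(0,\gamma_g)$, $\alpha,\beta\in(0,1)$. Set $j=0$ and start at step 2. Step 1 (only for $j\geq1$): set $\gamma_j\gets\gamma_{j-1}$ and $z^j\gets\bar z^{j-1}$. Step 2: compute some $\bar z^j\in T_{\mu,\gamma_j}(z^j)$. Step 3: if not all of the following hold: (a) $c(\bar z^j)<0$, (b) $q_\mu(\bar z^j)\leq q_\mu(z^j)-\frac{1-\alpha}{2\gamma_j}\|\bar z^j-z^j\|^2$, (c) $\|\nabla f_\mu(\bar z^j)-\nabla f_\mu(z^j)\|\leq\frac{\alpha}{\gamma_j}\|\bar z^j-z^j\|$, then set $\gamma_j\gets\beta\gamma_j$ and go back to Step 2. Step 4: if $\|\frac{1}{\gamma_j}(z^j-\bar z^j)-\nabla f_\mu(z^j)+\nabla f_\mu(\bar z^j)\|\leq\varepsilon$, return $\bar z^j$. Step 5: set $j\gets j+1$ and go to Step 1. *)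

theory Defs
  imports "HOL-Analysis.Analysis"
begin

definition loc_lipschitz :: "('a::metric_space \<Rightarrow> 'b::metric_space) \<Rightarrow> bool" where
  "loc_lipschitz F \<longleftrightarrow> (\<forall>x. \<exists>\<delta>>0. \<exists>L. L-lipschitz_on (ball x \<delta>) F)"

definition proper_fun :: "('a \<Rightarrow> ereal) \<Rightarrow> bool" where
  "proper_fun g \<longleftrightarrow> (\<exists>x. g x < \<infinity>) \<and> (\<forall>x. g x \<noteq> -\<infinity>)"

definition lsc_fun :: "('a::topological_space \<Rightarrow> ereal) \<Rightarrow> bool" where
  "lsc_fun g \<longleftrightarrow> (\<forall>X x. X \<longlonglongrightarrow> x \<longrightarrow> g x \<le> liminf (\<lambda>k. g (X k)))"

definition edom :: "('a \<Rightarrow> ereal) \<Rightarrow> 'a set" where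
  "edom g = {x. g x < \<infinity>}"

definition cont_rel_dom :: "('a::topological_space \<Rightarrow> ereal) \<Rightarrow> bool" where
  "cont_rel_dom g \<longleftrightarrow> (\<forall>X x. (\<forall>k. X k \<in> edom g) \<and> x \<in> edom g \<and> X \<longlonglongrightarrow> x
      \<longrightarrow> (\<lambda>k. g (X k)) \<longlonglongrightarrow> g x)"

definition prox_bdd_with :: "('a::real_normed_vector \<Rightarrow> ereal) \<Rightarrow> real \<Rightarrow> bool" where
  "prox_bdd_with g \<gamma> \<longleftrightarrow> (\<exists>B. \<forall>x. ereal B \<le> g x + ereal (norm x ^ 2 / (2 * \<gamma>)))"

definition prox_bounded :: "('a::real_normed_vector \<Rightarrow> ereal) \<Rightarrow> bool" where
  "prox_bounded g \<longleftrightarrow> (\<exists>\<gamma>>0. prox_bdd_with g \<gamma>)"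

definition prox_threshold :: "('a::real_normed_vector \<Rightarrow> ereal) \<Rightarrow> ereal" where
  "prox_threshold g = Sup {ereal \<gamma> | \<gamma>. \<gamma> > 0 \<and> prox_bdd_with g \<gamma>}"

definition prox :: "real \<Rightarrow> ('a::real_normed_vector \<Rightarrow> ereal) \<Rightarrow> 'a \<Rightarrow> 'a set" where
  "prox \<gamma> g x = {w. \<forall>u. g w + ereal (norm (w - x) ^ 2 / (2 * \<gamma>))
                         \<le> g u + ereal (norm (u - x) ^ 2 / (2 * \<gamma>))}"

definition strict_feas :: "('a \<Rightarrow> real ^ 'm) \<Rightarrow> 'a set" where
  "strict_feas c = {x. \<forall>i. c x $ i < 0}"

definition qmu :: "('a \<Rightarrow> real) \<Rightarrow> ('a \<Rightarrow> ereal) \<Rightarrow> (real \<Rightarrow> real) \<Rightarrow> ('a \<Rightarrow> real ^ 'm::finite)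
                   \<Rightarrow> real \<Rightarrow> 'a \<Rightarrow> ereal" where
  "qmu f g b c \<mu> z =
     (if z \<in> strict_feas c then ereal (f z + \<mu> * (\<Sum>i\<in>UNIV. b (c z $ i))) else \<infinity>) + g z"

(* \<nabla>f_\<mu>(z) = \<nabla>f(z) + \<mu> \<Sum>_i b'(c_i(z)) \<nabla>c_i(z), rows of the Jacobian Jc z are \<nabla>c_i(z) *)
definition gradfmu :: "('a \<Rightarrow> real ^ 'n) \<Rightarrow> (real \<Rightarrow> real) \<Rightarrow> ('a \<Rightarrow> real ^ 'm::finite)
                       \<Rightarrow> ('a \<Rightarrow> real ^ 'n ^ 'm) \<Rightarrow> real \<Rightarrow> 'a \<Rightarrow> real ^ 'n" where
  "gradfmu gradf db c Jc \<mu> z = gradf z + \<mu> *\<^sub>R (\<Sum>i\<in>UNIV. db (c z $ i) *\<^sub>R (Jc z $ i))"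

definition Tmap :: "('a::real_normed_vector \<Rightarrow> ereal) \<Rightarrow> ('a \<Rightarrow> 'a) \<Rightarrow> real \<Rightarrow> 'a \<Rightarrow> 'a set" where
  "Tmap g G \<gamma> z = prox \<gamma> g (z - \<gamma> *\<^sub>R G z)"

(* acceptance test of Step 3: (a), (b), (c); qm = q_\<mu>, G = \<nabla>f_\<mu> *)
definition ipfb_accept :: "('a \<Rightarrow> real ^ 'm) \<Rightarrow> ('a::real_normed_vector \<Rightarrow> ereal) \<Rightarrow> ('a \<Rightarrow> 'a)
                            \<Rightarrow> real \<Rightarrow> real \<Rightarrow> 'a \<Rightarrow> 'a \<Rightarrow> bool" where
  "ipfb_accept c qm G \<alpha> \<gamma> z zb \<longleftrightarrow>
     (\<forall>i. c zb $ i < 0)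
   \<and> qm zb \<le> qm z - ereal ((1 - \<alpha>) / (2 * \<gamma>) * norm (zb - z) ^ 2)
   \<and> norm (G zb - G z) \<le> \<alpha> / \<gamma> * norm (zb - z)"

definition ipfb_stop :: "('a::real_normed_vector \<Rightarrow> 'a) \<Rightarrow> real \<Rightarrow> real \<Rightarrow> 'a \<Rightarrow> 'a \<Rightarrow> bool" where
  "ipfb_stop G \<epsilon> \<gamma> z zb \<longleftrightarrow> norm ((1 / \<gamma>) *\<^sub>R (z - zb) - G z + G zb) \<le> \<epsilon>"

(* A (partial) execution of IP-FB(z0,\<mu>,\<epsilon>) consisting of the iterations j = 0,...,N-1:
   z j is the iterate z^j, zb j the accepted point \<bar>z^j, \<gamma> j the accepted stepsize \<gamma>_j.
   Iteration j starts with stepsize \<gamma>_0 (j = 0) or \<gamma>_{j-1} (j \<ge> 1), performs k backtracking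
   steps, each of which computed some candidate in T that failed the test, and then accepts.
   Iterations before the last one did not stop in Step 4. *)
definition ipfb_run :: "('a::real_normed_vector \<Rightarrow> ereal) \<Rightarrow> ('a \<Rightarrow> real ^ 'm) \<Rightarrow> ('a \<Rightarrow> ereal) \<Rightarrow> ('a \<Rightarrow> 'a)
     \<Rightarrow> real \<Rightarrow> real \<Rightarrow> real \<Rightarrow> real \<Rightarrow> 'a \<Rightarrow> nat
     \<Rightarrow> (nat \<Rightarrow> 'a) \<Rightarrow> (nat \<Rightarrow> 'a) \<Rightarrow> (nat \<Rightarrow> real) \<Rightarrow> bool" where
  "ipfb_run g c qm G \<alpha> \<beta> \<gamma>0 \<epsilon> z0 N z zb \<gamma> \<longleftrightarrow>
     z 0 = z0
   \<and> (\<forall>j. Suc j < N \<longrightarrow> z (Suc j) = zb j)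
   \<and> (\<forall>j<N. \<exists>k::nat.
          \<gamma> j = \<beta> ^ k * (if j = 0 then \<gamma>0 else \<gamma> (j - 1))
        \<and> (\<forall>i<k. \<exists>w \<in> Tmap g G (\<beta> ^ i * (if j = 0 then \<gamma>0 else \<gamma> (j - 1))) (z j).
                   \<not> ipfb_accept c qm G \<alpha> (\<beta> ^ i * (if j = 0 then \<gamma>0 else \<gamma> (j - 1))) (z j) w)
        \<and> zb j \<in> Tmap g G (\<gamma> j) (z j)
        \<and> ipfb_accept c qm G \<alpha> (\<gamma> j) (z j) (zb j))
   \<and> (\<forall>j. Suc j < N \<longrightarrow> \<not> ipfb_stop G \<epsilon> (\<gamma> j) (z j) (zb j))"

end

theory Submission
  imports Defs
begin

lemma loc_lipE:
  fixes F :: "'a::real_normed_vector \<Rightarrow> 'b::real_normed_vector"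
  assumes "loc_lipschitz F"
  obtains \<delta> L where "\<delta> > 0" "L \<ge> 0"
    "\<And>y1 y2. y1 \<in> ball x \<delta> \<Longrightarrow> y2 \<in> ball x \<delta> \<Longrightarrow> norm (F y1 - F y2) \<le> L * norm (y1 - y2)"
proof -
  from assms obtain \<delta> L where "\<delta> > 0" "L-lipschitz_on (ball x \<delta>) F"
    unfolding loc_lipschitz_def by blast
  then show ?thesis using that unfolding lipschitz_on_def by (auto simp: dist_norm)
qed

lemma lip_bound:
  fixes F :: "'a::real_normed_vector \<Rightarrow> 'b::real_normed_vector"
  assumes "L \<ge> 0" "\<And>y1 y2. y1 \<in> ball x \<delta> \<Longrightarrow> y2 \<in> ball x \<delta> \<Longrightarrow> norm (F y1 - F y2) \<le> L * norm (y1 - y2)"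
    "y \<in> ball x \<delta>"
  shows "norm (F y) \<le> norm (F x) + L * \<delta>"
proof -
  have "x \<in> ball x \<delta>" using assms(3) by (smt (verit) mem_ball zero_le_dist centre_in_ball)
  then have "norm (F y - F x) \<le> L * norm (y - x)" using assms by blast
  also have "\<dots> \<le> L * \<delta>" using assms(1,3) by (intro mult_left_mono) (auto simp: dist_norm norm_minus_commute)
  finally show ?thesis using norm_triangle_ineq2[of "F y" "F x"] by linarith
qed

lemma c_lip_local:
  fixes c :: "real ^ 'n \<Rightarrow> real ^ 'm" and Jc :: "real ^ 'n \<Rightarrow> real ^ 'n ^ 'm"
  assumes c_jac: "\<And>x. (c has_derivative (\<lambda>h. Jc x *v h)) (at x)"
    and c_lip: "loc_lipschitz Jc"
  obtains \<delta> Lc where "\<delta> > 0" "Lc \<ge> 0"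
    "\<And>y1 y2. y1 \<in> ball x \<delta> \<Longrightarrow> y2 \<in> ball x \<delta> \<Longrightarrow> norm (c y1 - c y2) \<le> Lc * norm (y1 - y2)"
proof -
  obtain \<delta> L where d: "\<delta> > 0" "L \<ge> 0"
    "\<And>y1 y2. y1 \<in> ball x \<delta> \<Longrightarrow> y2 \<in> ball x \<delta> \<Longrightarrow> norm (Jc y1 - Jc y2) \<le> L * norm (y1 - y2)"
    using loc_lipE[OF c_lip] by metis
  define MJ where "MJ = norm (Jc x) + L * \<delta>"
  have MJ0: "MJ \<ge> 0" using d unfolding MJ_def by simp
  have B: "onorm ((*v) (Jc y)) \<le> real CARD('m) * real CARD('n) * MJ" if "y \<in> ball x \<delta>" for y
  proof (rule onorm_le_matrix_component)
    fix i j
    have "\<bar>Jc y $ i $ j\<bar> \<le> norm (Jc y $ i)" by (rule component_le_norm_cart)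
    also have "\<dots> \<le> norm (Jc y)" by (simp add: Finite_Cartesian_Product.norm_nth_le)
    also have "\<dots> \<le> MJ" unfolding MJ_def by (rule lip_bound[OF d(2) d(3) that])
    finally show "\<bar>Jc y $ i $ j\<bar> \<le> MJ" .
  qed
  have "norm (c y1 - c y2) \<le> (real CARD('m) * real CARD('n) * MJ) * norm (y1 - y2)"
    if "y1 \<in> ball x \<delta>" "y2 \<in> ball x \<delta>" for y1 y2
  proof (rule differentiable_bound[where f'="\<lambda>y. (*v) (Jc y)"])
    show "convex (ball x \<delta>)" by simp
    show "(c has_derivative (*v) (Jc y)) (at y within ball x \<delta>)" for y
      using c_jac[of y] by (auto intro: has_derivative_at_withinI)
  qed (use B that in auto)
  moreover have "real CARD('m) * real CARD('n) * MJ \<ge> 0" using MJ0 by simp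
  ultimately show ?thesis using that[of \<delta> "real CARD('m) * real CARD('n) * MJ"] d(1) by blast
qed

lemma db_lip_local:
  fixes db :: "real \<Rightarrow> real"
  assumes b_C2: "\<exists>ddb. (\<forall>t<0. (db has_real_derivative ddb t) (at t)) \<and> continuous_on {..<0} ddb"
    and "b < 0"
  obtains Ld Md where "Ld \<ge> 0"
    "\<And>s t. s \<in> {a..b} \<Longrightarrow> t \<in> {a..b} \<Longrightarrow> \<bar>db s - db t\<bar> \<le> Ld * \<bar>s - t\<bar>"
    "\<And>s. s \<in> {a..b} \<Longrightarrow> \<bar>db s\<bar> \<le> Md"
proof -
  obtain ddb where dd: "\<forall>t<0. (db has_real_derivative ddb t) (at t)" "continuous_on {..<0} ddb"
    using b_C2 by blast
  have "continuous_on {a..b} ddb" by (rule continuous_on_subset[OF dd(2)]) (use assms(2) in auto)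
  then have "compact (ddb ` {a..b})" by (rule compact_continuous_image) simp
  then obtain K where K: "\<And>t. t \<in> {a..b} \<Longrightarrow> norm (ddb t) \<le> K"
    using compact_imp_bounded[of "ddb ` {a..b}"] unfolding bounded_iff by (metis image_eqI)
  define Ld where "Ld = max K 0"
  have lip: "\<bar>db s - db t\<bar> \<le> Ld * \<bar>s - t\<bar>" if st: "s \<in> {a..b}" "t \<in> {a..b}" "s < t" for s t
  proof -
    obtain \<xi> where xi: "s < \<xi>" "\<xi> < t" "db t - db s = (t - s) * ddb \<xi>"
      using MVT2[of s t db ddb] st dd(1) assms(2) by force
    have "\<xi> \<in> {a..b}" using xi st by auto
    then have "\<bar>ddb \<xi>\<bar> \<le> Ld" using K unfolding Ld_def by force
    then have "\<bar>db t - db s\<bar> \<le> (t - s) * Ld" using xi st by (simp add: abs_mult mult_left_mono)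
    then show ?thesis using st by (simp add: abs_minus_commute mult.commute)
  qed
  have lip2: "\<bar>db s - db t\<bar> \<le> Ld * \<bar>s - t\<bar>" if st: "s \<in> {a..b}" "t \<in> {a..b}" for s t
  proof (cases s t rule: linorder_cases)
    case greater then show ?thesis using lip[of t s] st by (simp add: abs_minus_commute)
  qed (use lip st in auto)
  have "\<bar>db s\<bar> \<le> \<bar>db a\<bar> + Ld * (b - a)" if "s \<in> {a..b}" for s
  proof -
    have "a \<in> {a..b}" using that by auto
    then have "\<bar>db s - db a\<bar> \<le> Ld * \<bar>s - a\<bar>" using lip2 that by blast
    also have "\<dots> \<le> Ld * (b - a)" using that Ld_def by (intro mult_left_mono) auto
    finally show ?thesis by linarith
  qed
  then show ?thesis using that[of Ld "\<bar>db a\<bar> + Ld * (b - a)"] lip2 Ld_def by auto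
qed


definition fm :: "(real ^ 'n \<Rightarrow> real) \<Rightarrow> (real \<Rightarrow> real) \<Rightarrow> (real ^ 'n \<Rightarrow> real ^ 'm::finite) \<Rightarrow> real \<Rightarrow> real ^ 'n \<Rightarrow> real"
  where "fm f b c \<mu> y = f y + \<mu> * (\<Sum>i\<in>UNIV. b (c y $ i))"

lemma fm_deriv:
  fixes f :: "real ^ 'n \<Rightarrow> real" and gradf :: "real ^ 'n \<Rightarrow> real ^ 'n"
    and c :: "real ^ 'n \<Rightarrow> real ^ 'm" and Jc :: "real ^ 'n \<Rightarrow> real ^ 'n ^ 'm"
    and b db :: "real \<Rightarrow> real"
  assumes f_grad: "\<And>x. (f has_derivative (\<lambda>h. gradf x \<bullet> h)) (at x)"
    and c_jac: "\<And>x. (c has_derivative (\<lambda>h. Jc x *v h)) (at x)"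
    and b_deriv: "\<And>t. t < 0 \<Longrightarrow> (b has_real_derivative db t) (at t)"
    and y: "y \<in> strict_feas c"
  shows "(fm f b c \<mu> has_derivative (\<lambda>h. gradfmu gradf db c Jc \<mu> y \<bullet> h)) (at y)"
proof -
  have ci: "((\<lambda>y. c y $ i) has_derivative (\<lambda>h. (Jc y *v h) $ i)) (at y)" for i
    using bounded_linear.has_derivative[OF bounded_linear_vec_nth c_jac] .
  have bi: "((\<lambda>y. b (c y $ i)) has_derivative (\<lambda>h. db (c y $ i) * (Jc y *v h) $ i)) (at y)" for i
  proof -
    have "c y $ i < 0" using y unfolding strict_feas_def by auto
    then have "(b has_derivative (\<lambda>h. db (c y $ i) * h)) (at (c y $ i))"
      using b_deriv unfolding has_field_derivative_def by auto
    from has_derivative_compose[OF ci this] show ?thesis .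
  qed
  have "((\<lambda>y. f y + \<mu> * (\<Sum>i\<in>UNIV. b (c y $ i))) has_derivative
        (\<lambda>h. gradf y \<bullet> h + \<mu> * (\<Sum>i\<in>UNIV. db (c y $ i) * (Jc y *v h) $ i))) (at y)"
    by (intro has_derivative_add f_grad has_derivative_mult_right has_derivative_sum bi)
  moreover have "(\<lambda>h. gradf y \<bullet> h + \<mu> * (\<Sum>i\<in>UNIV. db (c y $ i) * (Jc y *v h) $ i))
      = (\<lambda>h. gradfmu gradf db c Jc \<mu> y \<bullet> h)"
    unfolding gradfmu_def
    by (auto simp: inner_add_left inner_sum_left matrix_vector_mul_component)
  ultimately show ?thesis unfolding fm_def by simp
qed

lemma prod_diff_bound:
  fixes u1 u2 :: "'v::real_normed_vector" and a1 a2 :: real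
  shows "norm (a1 *\<^sub>R u1 - a2 *\<^sub>R u2) \<le> \<bar>a1 - a2\<bar> * norm u1 + \<bar>a2\<bar> * norm (u1 - u2)"
proof -
  have "a1 *\<^sub>R u1 - a2 *\<^sub>R u2 = (a1 - a2) *\<^sub>R u1 + a2 *\<^sub>R (u1 - u2)"
    by (simp add: algebra_simps)
  then show ?thesis using norm_triangle_ineq[of "(a1 - a2) *\<^sub>R u1" "a2 *\<^sub>R (u1 - u2)"] by simp
qed


lemma G_lip_local:
  fixes gradf :: "real ^ 'n \<Rightarrow> real ^ 'n"
    and c :: "real ^ 'n \<Rightarrow> real ^ 'm" and Jc :: "real ^ 'n \<Rightarrow> real ^ 'n ^ 'm"
    and db :: "real \<Rightarrow> real"
  assumes f_lip: "loc_lipschitz gradf"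
    and c_jac: "\<And>x. (c has_derivative (\<lambda>h. Jc x *v h)) (at x)"
    and c_lip: "loc_lipschitz Jc"
    and b_C2: "\<exists>ddb. (\<forall>t<0. (db has_real_derivative ddb t) (at t)) \<and> continuous_on {..<0} ddb"
    and z: "z \<in> strict_feas c"
  obtains r L where "r > 0" "L \<ge> 0" "ball z r \<subseteq> strict_feas c"
    "\<And>y1 y2. y1 \<in> ball z r \<Longrightarrow> y2 \<in> ball z r \<Longrightarrow>
       norm (gradfmu gradf db c Jc \<mu> y1 - gradfmu gradf db c Jc \<mu> y2) \<le> L * norm (y1 - y2)"
proof -
  obtain \<delta>f Lf where df: "\<delta>f > 0" "Lf \<ge> 0"
    "\<And>y1 y2. y1 \<in> ball z \<delta>f \<Longrightarrow> y2 \<in> ball z \<delta>f \<Longrightarrow> norm (gradf y1 - gradf y2) \<le> Lf * norm (y1 - y2)"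
    using loc_lipE[OF f_lip] by metis
  obtain \<delta>J LJ where dJ: "\<delta>J > 0" "LJ \<ge> 0"
    "\<And>y1 y2. y1 \<in> ball z \<delta>J \<Longrightarrow> y2 \<in> ball z \<delta>J \<Longrightarrow> norm (Jc y1 - Jc y2) \<le> LJ * norm (y1 - y2)"
    using loc_lipE[OF c_lip] by metis
  obtain \<delta>c Lc where dc: "\<delta>c > 0" "Lc \<ge> 0"
    "\<And>y1 y2. y1 \<in> ball z \<delta>c \<Longrightarrow> y2 \<in> ball z \<delta>c \<Longrightarrow> norm (c y1 - c y2) \<le> Lc * norm (y1 - y2)"
    using c_lip_local[OF c_jac c_lip] by metis
  define MJ where "MJ = norm (Jc z) + LJ * \<delta>J"
  have MJ: "norm (Jc y) \<le> MJ" if "y \<in> ball z \<delta>J" for y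
    unfolding MJ_def by (rule lip_bound[OF dJ(2) dJ(3) that])
  define e where "e = Min (range (\<lambda>i. - (c z $ i))) / 2"
  have e0: "e > 0" using z unfolding e_def strict_feas_def by (simp add: Min_gr_iff)
  have ce: "c z $ i \<le> - 2 * e" for i
  proof -
    have "Min (range (\<lambda>i. - (c z $ i))) \<le> - (c z $ i)" by (rule Min_le) auto
    then show ?thesis unfolding e_def by linarith
  qed
  define a where "a = - (norm (c z) + e)"
  have ae: "a \<le> - e" unfolding a_def by simp
  obtain Ld Md where dd: "Ld \<ge> 0"
    "\<And>s t. s \<in> {a..-e} \<Longrightarrow> t \<in> {a..-e} \<Longrightarrow> \<bar>db s - db t\<bar> \<le> Ld * \<bar>s - t\<bar>"
    "\<And>s. s \<in> {a..-e} \<Longrightarrow> \<bar>db s\<bar> \<le> Md"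
    using db_lip_local[OF b_C2, of "-e" a] e0 by auto
  have Md0: "Md \<ge> 0" using dd(3)[of a] ae by force
  define r where "r = min \<delta>f (min \<delta>c (min \<delta>J (e / (Lc + 1))))"
  have r0: "r > 0" unfolding r_def using df dc dJ e0 by auto
  have rsub: "ball z r \<subseteq> ball z \<delta>f" "ball z r \<subseteq> ball z \<delta>c" "ball z r \<subseteq> ball z \<delta>J"
    unfolding r_def by auto
  have crange: "c y $ i \<in> {a..-e}" if y: "y \<in> ball z r" for y i
  proof -
    have "z \<in> ball z \<delta>c" using dc by simp
    then have "norm (c y - c z) \<le> Lc * norm (y - z)" using dc(3) rsub y by blast
    also have "\<dots> \<le> Lc * (e / (Lc + 1))"
    proof (rule mult_left_mono)
      have "norm (y - z) < r" using y by (simp add: dist_norm norm_minus_commute)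
      then show "norm (y - z) \<le> e / (Lc + 1)" unfolding r_def by linarith
    qed (use dc in simp)
    also have "\<dots> \<le> e" using dc(2) e0 by (simp add: field_simps)
    finally have "\<bar>(c y - c z) $ i\<bar> \<le> e" using component_le_norm_cart[of "c y - c z" i] by linarith
    then have "\<bar>c y $ i - c z $ i\<bar> \<le> e" by simp
    moreover have "\<bar>c z $ i\<bar> \<le> norm (c z)" by (rule component_le_norm_cart)
    ultimately show ?thesis using ce[of i] unfolding a_def by auto
  qed
  have sub: "ball z r \<subseteq> strict_feas c"
    using crange e0 unfolding strict_feas_def by (auto simp: less_le_trans) (smt (verit) atLeastAtMost_iff)
  define K where "K = Ld * Lc * MJ + Md * LJ"
  have MJ0: "MJ \<ge> 0" unfolding MJ_def using dJ by simp
  have K0: "K \<ge> 0" unfolding K_def using dd(1) dc(2) MJ0 Md0 dJ(2) by simp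
  have termb: "norm (db (c y1 $ i) *\<^sub>R (Jc y1 $ i) - db (c y2 $ i) *\<^sub>R (Jc y2 $ i)) \<le> K * norm (y1 - y2)"
    if y: "y1 \<in> ball z r" "y2 \<in> ball z r" for y1 y2 i
  proof -
    have "norm (db (c y1 $ i) *\<^sub>R (Jc y1 $ i) - db (c y2 $ i) *\<^sub>R (Jc y2 $ i))
        \<le> \<bar>db (c y1 $ i) - db (c y2 $ i)\<bar> * norm (Jc y1 $ i) + \<bar>db (c y2 $ i)\<bar> * norm (Jc y1 $ i - Jc y2 $ i)"
      by (rule prod_diff_bound)
    also have "\<dots> \<le> (Ld * (Lc * norm (y1 - y2))) * MJ + Md * (LJ * norm (y1 - y2))"
    proof (rule add_mono)
      have "\<bar>db (c y1 $ i) - db (c y2 $ i)\<bar> \<le> Ld * \<bar>c y1 $ i - c y2 $ i\<bar>"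
        using dd(2) crange y by blast
      also have "\<bar>c y1 $ i - c y2 $ i\<bar> \<le> norm (c y1 - c y2)"
        using component_le_norm_cart[of "c y1 - c y2" i] by simp
      also have "\<dots> \<le> Lc * norm (y1 - y2)" using dc(3) rsub y by blast
      finally have A: "\<bar>db (c y1 $ i) - db (c y2 $ i)\<bar> \<le> Ld * (Lc * norm (y1 - y2))"
        using dd(1) by (simp add: mult_left_mono)
      have B: "norm (Jc y1 $ i) \<le> MJ"
        using MJ[of y1] rsub y Finite_Cartesian_Product.norm_nth_le[of "Jc y1" i] by auto
      show "\<bar>db (c y1 $ i) - db (c y2 $ i)\<bar> * norm (Jc y1 $ i) \<le> (Ld * (Lc * norm (y1 - y2))) * MJ"
        using A B by (meson abs_ge_zero mult_mono norm_ge_zero order_trans)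
    next
      have A: "\<bar>db (c y2 $ i)\<bar> \<le> Md" using dd(3) crange y by blast
      have "norm (Jc y1 $ i - Jc y2 $ i) \<le> norm (Jc y1 - Jc y2)"
        using Finite_Cartesian_Product.norm_nth_le[of "Jc y1 - Jc y2" i] by simp
      also have "\<dots> \<le> LJ * norm (y1 - y2)" using dJ(3) rsub y by blast
      finally show "\<bar>db (c y2 $ i)\<bar> * norm (Jc y1 $ i - Jc y2 $ i) \<le> Md * (LJ * norm (y1 - y2))"
        using A Md0 by (meson abs_ge_zero mult_mono norm_ge_zero order_trans)
    qed
    also have "\<dots> = K * norm (y1 - y2)" unfolding K_def by (simp add: algebra_simps)
    finally show ?thesis .
  qed
  define L where "L = Lf + \<bar>\<mu>\<bar> * (real CARD('m) * K)"
  have L0: "L \<ge> 0" unfolding L_def using df(2) K0 by simp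
  have "norm (gradfmu gradf db c Jc \<mu> y1 - gradfmu gradf db c Jc \<mu> y2) \<le> L * norm (y1 - y2)"
    if y: "y1 \<in> ball z r" "y2 \<in> ball z r" for y1 y2
  proof -
    let ?S = "\<lambda>y. \<Sum>i\<in>UNIV. db (c y $ i) *\<^sub>R (Jc y $ i)"
    have eq: "gradfmu gradf db c Jc \<mu> y1 - gradfmu gradf db c Jc \<mu> y2
        = (gradf y1 - gradf y2) + \<mu> *\<^sub>R (?S y1 - ?S y2)"
      unfolding gradfmu_def by (simp add: algebra_simps)
    have "norm (?S y1 - ?S y2) = norm (\<Sum>i\<in>UNIV. db (c y1 $ i) *\<^sub>R (Jc y1 $ i) - db (c y2 $ i) *\<^sub>R (Jc y2 $ i))"
      by (simp add: sum_subtractf)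
    also have "\<dots> \<le> (\<Sum>i\<in>UNIV. norm (db (c y1 $ i) *\<^sub>R (Jc y1 $ i) - db (c y2 $ i) *\<^sub>R (Jc y2 $ i)))"
      by (rule norm_sum)
    also have "\<dots> \<le> (\<Sum>i\<in>(UNIV::'m set). K * norm (y1 - y2))"
      by (rule sum_mono) (rule termb[OF y])
    also have "\<dots> = real CARD('m) * K * norm (y1 - y2)" by simp
    finally have S: "norm (?S y1 - ?S y2) \<le> real CARD('m) * K * norm (y1 - y2)" .
    have "norm (gradfmu gradf db c Jc \<mu> y1 - gradfmu gradf db c Jc \<mu> y2)
        \<le> norm (gradf y1 - gradf y2) + \<bar>\<mu>\<bar> * norm (?S y1 - ?S y2)"
      unfolding eq using norm_triangle_ineq[of "gradf y1 - gradf y2" "\<mu> *\<^sub>R (?S y1 - ?S y2)"] by simp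
    also have "\<dots> \<le> Lf * norm (y1 - y2) + \<bar>\<mu>\<bar> * (real CARD('m) * K * norm (y1 - y2))"
    proof (intro add_mono mult_left_mono)
      show "norm (gradf y1 - gradf y2) \<le> Lf * norm (y1 - y2)" using df(3) rsub y by blast
    qed (use S in auto)
    also have "\<dots> = L * norm (y1 - y2)" unfolding L_def by (simp add: algebra_simps)
    finally show ?thesis .
  qed
  then show ?thesis using that r0 L0 sub by blast
qed


lemma descent:
  fixes F :: "'a::real_inner \<Rightarrow> real"
  assumes der: "\<And>y. y \<in> ball z r \<Longrightarrow> (F has_derivative (\<lambda>h. G y \<bullet> h)) (at y)"
    and lip: "\<And>y1 y2. y1 \<in> ball z r \<Longrightarrow> y2 \<in> ball z r \<Longrightarrow> norm (G y1 - G y2) \<le> L * norm (y1 - y2)"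
    and L0: "L \<ge> 0" and w: "w \<in> ball z r"
  shows "F w \<le> F z + G z \<bullet> (w - z) + L * norm (w - z) ^ 2"
proof -
  define d where "d = w - z"
  have r0: "r > 0" using w by (smt (verit) mem_ball zero_le_dist)
  have inb: "z + t *\<^sub>R d \<in> ball z r" if "0 \<le> t" "t \<le> 1" for t
  proof -
    have "norm (t *\<^sub>R d) \<le> norm d" using that by (simp add: mult_left_le_one_le)
    also have "norm d < r" using w unfolding d_def by (simp add: dist_norm norm_minus_commute)
    finally show ?thesis by (simp add: dist_norm)
  qed
  have D: "((\<lambda>t. F (z + t *\<^sub>R d)) has_real_derivative (G (z + t *\<^sub>R d) \<bullet> d)) (at t)"
    if "0 \<le> t" "t \<le> 1" for t
  proof -
    have l: "((\<lambda>t. z + t *\<^sub>R d) has_derivative (\<lambda>h. h *\<^sub>R d)) (at t)"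
      by (auto intro!: derivative_eq_intros)
    have "((\<lambda>t. F (z + t *\<^sub>R d)) has_derivative (\<lambda>h. G (z + t *\<^sub>R d) \<bullet> (h *\<^sub>R d))) (at t)"
      using has_derivative_compose[OF l der[OF inb[OF that]]] .
    moreover have "(\<lambda>h. G (z + t *\<^sub>R d) \<bullet> (h *\<^sub>R d)) = (*) (G (z + t *\<^sub>R d) \<bullet> d)"
      by (auto simp: inner_scaleR_right mult.commute)
    ultimately show ?thesis unfolding has_field_derivative_def by simp
  qed
  obtain s where s: "0 < s" "s < 1" "F (z + 1 *\<^sub>R d) - F (z + 0 *\<^sub>R d) = (1 - 0) * (G (z + s *\<^sub>R d) \<bullet> d)"
    using MVT2[of 0 1 "\<lambda>t. F (z + t *\<^sub>R d)" "\<lambda>t. G (z + t *\<^sub>R d) \<bullet> d"] D by auto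
  have "G (z + s *\<^sub>R d) \<bullet> d - G z \<bullet> d = (G (z + s *\<^sub>R d) - G z) \<bullet> d" by (simp add: inner_diff_left)
  also have "\<dots> \<le> norm (G (z + s *\<^sub>R d) - G z) * norm d" by (rule norm_cauchy_schwarz)
  also have "\<dots> \<le> (L * norm (s *\<^sub>R d)) * norm d"
  proof (rule mult_right_mono)
    have "z \<in> ball z r" using r0 by simp
    then show "norm (G (z + s *\<^sub>R d) - G z) \<le> L * norm (s *\<^sub>R d)"
      using lip[OF inb[of s] \<open>z \<in> ball z r\<close>] s by simp
  qed simp
  also have "\<dots> \<le> L * norm d ^ 2"
    using s L0 by (simp add: power2_eq_square mult_left_le_one_le mult_right_mono mult_left_mono mult.assoc)
  finally show ?thesis using s(3) unfolding d_def by simp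
qed

lemma prox_real:
  assumes "proper_fun g" "w \<in> prox \<gamma> g x" "g u = ereal gu"
  obtains gw where "g w = ereal gw"
    "gw + norm (w - x) ^ 2 / (2 * \<gamma>) \<le> gu + norm (u - x) ^ 2 / (2 * \<gamma>)"
proof -
  have i: "g w + ereal (norm (w - x) ^ 2 / (2 * \<gamma>)) \<le> g u + ereal (norm (u - x) ^ 2 / (2 * \<gamma>))"
    using assms(2) unfolding prox_def by blast
  have "g w \<noteq> -\<infinity>" using assms(1) unfolding proper_fun_def by blast
  moreover have "g w \<noteq> \<infinity>" using i assms(3) by auto
  ultimately obtain gw where "g w = ereal gw" by (cases "g w") auto
  then show ?thesis using that i assms(3) by auto
qed


lemma young_sq:
  fixes p s e :: real
  assumes "e > 0" "p \<ge> 0" "s \<ge> 0"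
  shows "(p + s)^2 \<le> (1 + e) * p^2 + (1 + 1/e) * s^2"
proof -
  have "0 \<le> (e * p - s)^2 / e" using assms by simp
  also have "(e * p - s)^2 / e = e * p^2 - 2 * p * s + s^2 / e"
    using assms by (simp add: field_simps power2_eq_square)
  finally have "2 * p * s \<le> e * p^2 + s^2 / e" by linarith
  then show ?thesis by (simp add: power2_eq_square field_simps)
qed

lemma prox_nonempty:
  fixes g :: "'a::euclidean_space \<Rightarrow> ereal"
  assumes gp: "proper_fun g" and gl: "lsc_fun g" and pb: "prox_bdd_with g \<gamma>1"
    and \<gamma>: "0 < \<gamma>" "\<gamma> < \<gamma>1"
  shows "prox \<gamma> g x \<noteq> {}"
proof -
  obtain B where B: "\<And>u. ereal B \<le> g u + ereal (norm u ^ 2 / (2 * \<gamma>1))"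
    using pb unfolding prox_bdd_with_def by blast
  obtain u0 where u0: "g u0 < \<infinity>" using gp unfolding proper_fun_def by blast
  have nm: "\<And>u. g u \<noteq> -\<infinity>" using gp unfolding proper_fun_def by blast
  define S where "S = {u. g u < \<infinity>}"
  define \<psi> where "\<psi> u = real_of_ereal (g u) + norm (u - x)^2 / (2 * \<gamma>)" for u
  have gS: "g u = ereal (real_of_ereal (g u))" if "u \<in> S" for u
    using that nm[of u] unfolding S_def by (cases "g u") auto
  define \<gamma>2 where "\<gamma>2 = (\<gamma> + \<gamma>1) / 2"
  define e where "e = (\<gamma>1 - \<gamma>) / (2 * \<gamma>)"
  define \<kappa> where "\<kappa> = 1 / (2 * \<gamma>2) - 1 / (2 * \<gamma>1)"
  define K where "K = (1 + 1/e) * norm x ^ 2 / (2 * \<gamma>2)"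
  have e0: "e > 0" unfolding e_def using \<gamma> by simp
  have g20: "\<gamma>2 > 0" unfolding \<gamma>2_def using \<gamma> by simp
  have "\<gamma>2 < \<gamma>1" unfolding \<gamma>2_def using \<gamma> by simp
  then have "1 / (2 * \<gamma>1) < 1 / (2 * \<gamma>2)" using g20 by (simp add: frac_less2)
  then have k0: "\<kappa> > 0" unfolding \<kappa>_def by simp
  have e1: "1 + e = \<gamma>2 / \<gamma>" unfolding e_def \<gamma>2_def using \<gamma> by (simp add: field_simps)
  have key: "norm u ^ 2 / (2 * \<gamma>2) \<le> norm (u - x) ^ 2 / (2 * \<gamma>) + K" for u
  proof -
    have "norm u \<le> norm (u - x) + norm x" using norm_triangle_sub[of u x] by simp
    then have "norm u ^ 2 \<le> (norm (u - x) + norm x) ^ 2" by (simp add: power_mono)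
    also have "\<dots> \<le> (1 + e) * norm (u - x) ^ 2 + (1 + 1/e) * norm x ^ 2"
      using young_sq e0 by simp
    finally have "norm u ^ 2 / (2 * \<gamma>2) \<le> ((1 + e) * norm (u - x) ^ 2 + (1 + 1/e) * norm x ^ 2) / (2 * \<gamma>2)"
      using g20 by (simp add: divide_right_mono)
    also have "\<dots> = norm (u - x) ^ 2 / (2 * \<gamma>) + K"
      unfolding e1 K_def using g20 \<gamma> by (simp add: field_simps)
    finally show ?thesis .
  qed
  have lower: "B + \<kappa> * norm u ^ 2 - K \<le> \<psi> u" if "u \<in> S" for u
  proof -
    have "ereal B \<le> ereal (real_of_ereal (g u)) + ereal (norm u ^ 2 / (2 * \<gamma>1))"
      using B[of u] gS[OF that] by simp
    then have "B \<le> real_of_ereal (g u) + norm u ^ 2 / (2 * \<gamma>1)" by simp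
    moreover note key[of u]
    ultimately show ?thesis unfolding \<psi>_def \<kappa>_def by (simp add: field_simps)
  qed
  have Sne: "S \<noteq> {}" using u0 unfolding S_def by blast
  have bdd: "bdd_below (\<psi> ` S)"
  proof (rule bdd_belowI2)
    fix u assume "u \<in> S"
    moreover have "\<kappa> * norm u ^ 2 \<ge> 0" using k0 by simp
    ultimately show "B - K \<le> \<psi> u" using lower by fastforce
  qed
  define m where "m = Inf (\<psi> ` S)"
  have mle: "m \<le> \<psi> u" if "u \<in> S" for u unfolding m_def using bdd that by (simp add: cInf_lower)
  have "\<forall>k. \<exists>u. u \<in> S \<and> \<psi> u < m + inverse (real (Suc k))"
  proof
    fix k
    have "Inf (\<psi> ` S) < m + inverse (real (Suc k))" unfolding m_def by simp
    then obtain v where "v \<in> \<psi> ` S" "v < m + inverse (real (Suc k))"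
      using cInf_lessD[of "\<psi> ` S"] Sne by blast
    then show "\<exists>u. u \<in> S \<and> \<psi> u < m + inverse (real (Suc k))" by blast
  qed
  then obtain u where u: "\<And>k. u k \<in> S" "\<And>k. \<psi> (u k) < m + inverse (real (Suc k))"
    by metis
  define R where "R = 1 + (m + 1 - B + K) / \<kappa>"
  have "bounded (range u)"
    unfolding bounded_iff
  proof (intro exI ballI)
    fix y assume "y \<in> range u"
    then obtain k where y: "y = u k" by blast
    have "inverse (real (Suc k)) \<le> 1" by (simp add: inverse_le_1_iff)
    then have "\<kappa> * norm y ^ 2 \<le> m + 1 - B + K" using lower[OF u(1)[of k]] u(2)[of k] unfolding y by linarith
    then have "norm y ^ 2 \<le> (m + 1 - B + K) / \<kappa>" using k0 by (simp add: field_simps)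
    moreover have "norm y \<le> 1 + norm y ^ 2"
    proof -
      have "0 \<le> (norm y - 1)^2" by simp
      also have "(norm y - 1)^2 = norm y ^ 2 + 1 - 2 * norm y" by (simp add: power2_diff)
      finally show ?thesis using zero_le_power2[of "norm y"] by linarith
    qed
    ultimately show "norm y \<le> R" unfolding R_def by linarith
  qed
  then obtain l r where lr: "strict_mono r" "(u \<circ> r) \<longlonglongrightarrow> l"
    using bounded_imp_convergent_subsequence by blast
  have psi_lim: "(\<lambda>k. \<psi> (u k)) \<longlonglongrightarrow> m"
  proof (rule tendsto_sandwich[of "\<lambda>k. m" _ _ "\<lambda>k. m + inverse (real (Suc k))"])
    show "\<forall>\<^sub>F k in sequentially. m \<le> \<psi> (u k)" using mle u(1) by simp
    show "\<forall>\<^sub>F k in sequentially. \<psi> (u k) \<le> m + inverse (real (Suc k))" using u(2) by (simp add: less_imp_le)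
    show "(\<lambda>k. m + inverse (real (Suc k))) \<longlonglongrightarrow> m"
      using tendsto_add[OF tendsto_const LIMSEQ_inverse_real_of_nat, of m] by simp
  qed simp
  have l1: "(\<lambda>k. \<psi> (u (r k))) \<longlonglongrightarrow> m"
    using LIMSEQ_subseq_LIMSEQ[OF psi_lim lr(1)] by (simp add: o_def)
  have l2: "(\<lambda>k. norm (u (r k) - x)^2 / (2 * \<gamma>)) \<longlonglongrightarrow> norm (l - x)^2 / (2 * \<gamma>)"
    using lr(2) \<gamma>(1) unfolding o_def by (intro tendsto_intros) auto
  define Q where "Q = norm (l - x)^2 / (2 * \<gamma>)"
  have l3: "(\<lambda>k. real_of_ereal (g (u (r k)))) \<longlonglongrightarrow> m - Q"
    using tendsto_diff[OF l1 l2] unfolding \<psi>_def Q_def by simp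
  have l4: "(\<lambda>k. g (u (r k))) \<longlonglongrightarrow> ereal (m - Q)"
  proof -
    have "(\<lambda>k. ereal (real_of_ereal (g (u (r k))))) \<longlonglongrightarrow> ereal (m - Q)"
      using l3 by (simp add: tendsto_ereal)
    moreover have "(\<lambda>k. ereal (real_of_ereal (g (u (r k))))) = (\<lambda>k. g (u (r k)))"
      by (rule ext, rule sym[OF gS[OF u(1)]])
    ultimately show ?thesis by simp
  qed
  have "g l \<le> liminf (\<lambda>k. g ((u \<circ> r) k))"
    using gl lr(2) unfolding lsc_fun_def by blast
  also have "liminf (\<lambda>k. g ((u \<circ> r) k)) = ereal (m - Q)"
    using lim_imp_Liminf[OF trivial_limit_sequentially l4] by (simp add: o_def)
  finally have gl_le: "g l \<le> ereal (m - Q)" .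
  have "l \<in> prox \<gamma> g x"
    unfolding prox_def
  proof (intro CollectI allI)
    fix v
    have A: "g l + ereal Q \<le> ereal m"
      using gl_le nm[of l] by (cases "g l") auto
    have Bv: "ereal m \<le> g v + ereal (norm (v - x) ^ 2 / (2 * \<gamma>))"
    proof (cases "v \<in> S")
      case True
      have "m \<le> real_of_ereal (g v) + norm (v - x) ^ 2 / (2 * \<gamma>)"
        using mle[OF True] unfolding \<psi>_def .
      then have "ereal m \<le> ereal (real_of_ereal (g v)) + ereal (norm (v - x) ^ 2 / (2 * \<gamma>))"
        by simp
      then show ?thesis using gS[OF True] by simp
    next
      case False
      then have "g v = \<infinity>" unfolding S_def by simp
      then show ?thesis by simp
    qed
    show "g l + ereal (norm (l - x) ^ 2 / (2 * \<gamma>)) \<le> g v + ereal (norm (v - x) ^ 2 / (2 * \<gamma>))"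
      using A Bv unfolding Q_def by (rule order_trans)
  qed
  then show ?thesis by blast
qed


lemma norm_add_sq:
  fixes a b :: "'a::real_inner"
  shows "norm (a + b) ^ 2 = norm a ^ 2 + 2 * (a \<bullet> b) + norm b ^ 2"
  by (simp add: power2_norm_eq_inner inner_add_left inner_add_right inner_commute)

lemma accept_small:
  fixes f :: "real ^ 'n \<Rightarrow> real" and gradf :: "real ^ 'n \<Rightarrow> real ^ 'n"
    and g :: "real ^ 'n \<Rightarrow> ereal"
    and c :: "real ^ 'n \<Rightarrow> real ^ 'm" and Jc :: "real ^ 'n \<Rightarrow> real ^ 'n ^ 'm"
    and b db :: "real \<Rightarrow> real"
  assumes f_grad: "\<And>x. (f has_derivative (\<lambda>h. gradf x \<bullet> h)) (at x)"
    and f_lip: "loc_lipschitz gradf"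
    and g_proper: "proper_fun g"
    and c_jac: "\<And>x. (c has_derivative (\<lambda>h. Jc x *v h)) (at x)"
    and c_lip: "loc_lipschitz Jc"
    and b_deriv: "\<And>t. t < 0 \<Longrightarrow> (b has_real_derivative db t) (at t)"
    and b_C2: "\<exists>ddb. (\<forall>t<0. (db has_real_derivative ddb t) (at t)) \<and> continuous_on {..<0} ddb"
    and pb: "prox_bdd_with g \<gamma>1" and g1: "\<gamma>1 > 0"
    and alpha: "0 < \<alpha>" "\<alpha> < 1"
    and z: "z \<in> strict_feas c" and gz: "g z = ereal gz"
  obtains \<delta> where "\<delta> > 0"
    "\<And>\<gamma> w. 0 < \<gamma> \<Longrightarrow> \<gamma> < \<delta> \<Longrightarrow> w \<in> Tmap g (gradfmu gradf db c Jc \<mu>) \<gamma> z \<Longrightarrow>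
        ipfb_accept c (qmu f g b c \<mu>) (gradfmu gradf db c Jc \<mu>) \<alpha> \<gamma> z w"
proof -
  let ?G = "gradfmu gradf db c Jc \<mu>"
  define v where "v = ?G z"
  obtain r L where rL: "r > 0" "L \<ge> 0" "ball z r \<subseteq> strict_feas c"
    "\<And>y1 y2. y1 \<in> ball z r \<Longrightarrow> y2 \<in> ball z r \<Longrightarrow> norm (?G y1 - ?G y2) \<le> L * norm (y1 - y2)"
    using G_lip_local[OF f_lip c_jac c_lip b_C2 z, where \<mu>=\<mu>] by metis
  obtain B where B: "\<And>u. ereal B \<le> g u + ereal (norm u ^ 2 / (2 * \<gamma>1))"
    using pb unfolding prox_bdd_with_def by blast
  define C where "C = 4 * (\<bar>gz\<bar> + norm v ^ 2 / 2 + \<bar>B\<bar> + (norm z + norm v) ^ 2 / \<gamma>1)"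
  have C0: "C \<ge> 0" unfolding C_def using g1 by simp
  define \<delta> where "\<delta> = min 1 (min (\<gamma>1 / 4) (min (\<alpha> / (2 * (L + 1))) (min (r^2 / (4 * (C + 1))) (r / (2 * (norm v + 1))))))"
  have d0: "\<delta> > 0" unfolding \<delta>_def using g1 alpha rL C0 by (simp add: add_nonneg_pos)
  have main: "ipfb_accept c (qmu f g b c \<mu>) ?G \<alpha> \<gamma> z w"
    if \<gamma>: "0 < \<gamma>" "\<gamma> < \<delta>" and w: "w \<in> Tmap g ?G \<gamma> z" for \<gamma> w
  proof -
    define x where "x = z - \<gamma> *\<^sub>R v"
    have wp: "w \<in> prox \<gamma> g x" using w unfolding Tmap_def x_def v_def .
    obtain gw where gw: "g w = ereal gw"
      "gw + norm (w - x) ^ 2 / (2 * \<gamma>) \<le> gz + norm (z - x) ^ 2 / (2 * \<gamma>)"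
      using prox_real[OF g_proper wp gz] by blast
    have zx: "norm (z - x) ^ 2 / (2 * \<gamma>) = \<gamma> * norm v ^ 2 / 2"
      unfolding x_def using \<gamma> by (simp add: power2_eq_square)
    have \<gamma>1: "\<gamma> \<le> 1" "4 * \<gamma> \<le> \<gamma>1" "\<gamma> * (2 * (L + 1)) < \<alpha>" "\<gamma> * (4 * (C + 1)) < r^2"
      "\<gamma> * (2 * (norm v + 1)) < r"
    proof -
      have h: "\<gamma> < 1" "\<gamma> < \<gamma>1 / 4" "\<gamma> < \<alpha> / (2 * (L + 1))" "\<gamma> < r^2 / (4 * (C + 1))"
        "\<gamma> < r / (2 * (norm v + 1))" using \<gamma> unfolding \<delta>_def by auto
      have pv: "0 < 2 * (norm v + 1)" by (smt (verit) norm_ge_zero)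
      have p: "0 < 2 * (L + 1)" "0 < 4 * (C + 1)" "0 < 2 * (norm v + 1)" using rL(2) C0 pv by simp_all
      show "\<gamma> \<le> 1" "4 * \<gamma> \<le> \<gamma>1" using h by auto
      show "\<gamma> * (2 * (L + 1)) < \<alpha>" using h(3) pos_less_divide_eq[OF p(1)] by blast
      show "\<gamma> * (4 * (C + 1)) < r^2" using h(4) pos_less_divide_eq[OF p(2)] by blast
      show "\<gamma> * (2 * (norm v + 1)) < r" using h(5) pos_less_divide_eq[OF p(3)] by blast
    qed
    have Bw: "B \<le> gw + norm w ^ 2 / (2 * \<gamma>1)" using B[of w] gw(1) by simp
    define p where "p = norm (w - x)"
    define s where "s = norm x"
    have sb: "s \<le> norm z + norm v"
    proof -
      have "s \<le> norm z + norm (\<gamma> *\<^sub>R v)" unfolding s_def x_def by (rule norm_triangle_ineq4)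
      also have "norm (\<gamma> *\<^sub>R v) \<le> norm v" using \<gamma> \<gamma>1 by (simp add: mult_left_le_one_le)
      finally show ?thesis by simp
    qed
    have qb: "norm w ^ 2 \<le> 2 * p ^ 2 + 2 * s ^ 2"
    proof -
      have "norm w \<le> p + s" unfolding p_def s_def using norm_triangle_sub[of w x] by simp
      then have "norm w ^ 2 \<le> (p + s) ^ 2" by (simp add: power_mono)
      also have "\<dots> \<le> 2 * p ^ 2 + 2 * s ^ 2" using young_sq[of 1 p s] unfolding p_def s_def by simp
      finally show ?thesis .
    qed
    have A1: "p ^ 2 / (2 * \<gamma>) \<le> gz + norm v ^ 2 / 2 - B + (2 * p ^ 2 + 2 * s ^ 2) / (2 * \<gamma>1)"
    proof -
      have "\<gamma> * norm v ^ 2 / 2 \<le> norm v ^ 2 / 2" using \<gamma> \<gamma>1 by (simp add: mult_left_le_one_le)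
      moreover have "norm w ^ 2 / (2 * \<gamma>1) \<le> (2 * p ^ 2 + 2 * s ^ 2) / (2 * \<gamma>1)"
        using qb g1 by (simp add: divide_right_mono)
      ultimately show ?thesis using gw(2) zx Bw unfolding p_def by linarith
    qed
    have A2: "p ^ 2 / \<gamma>1 \<le> p ^ 2 / (4 * \<gamma>)"
      using \<gamma> \<gamma>1 by (simp add: frac_le)
    have A3: "s ^ 2 / \<gamma>1 \<le> (norm z + norm v) ^ 2 / \<gamma>1"
      using sb g1 by (simp add: divide_right_mono power_mono s_def)
    have A4: "p ^ 2 / (2 * \<gamma>) = p ^ 2 / (4 * \<gamma>) + p ^ 2 / (4 * \<gamma>)" by (simp add: field_simps)
    have "(2 * p ^ 2 + 2 * s ^ 2) / (2 * \<gamma>1) = p ^ 2 / \<gamma>1 + s ^ 2 / \<gamma>1" using g1 by (simp add: field_simps)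
    with A1 A2 A3 A4 have "p ^ 2 / (4 * \<gamma>) \<le> gz + norm v ^ 2 / 2 - B + (norm z + norm v) ^ 2 / \<gamma>1"
      by linarith
    then have "p ^ 2 / (4 * \<gamma>) \<le> C / 4" unfolding C_def by simp
    then have pC: "p ^ 2 \<le> C * \<gamma>" using \<gamma> by (simp add: field_simps)
    have "p ^ 2 < (r / 2) ^ 2"
    proof -
      have "C * \<gamma> \<le> (C + 1) * \<gamma>" using \<gamma> by simp
      also have "(C + 1) * \<gamma> < r ^ 2 / 4" using \<gamma>1(4) C0 by (simp add: field_simps)
      finally show ?thesis using pC by (simp add: power_divide)
    qed
    then have pr: "p < r / 2" using rL(1) power_less_imp_less_base[of p 2 "r/2"] by simp
    have "norm (w - z) \<le> p + norm (\<gamma> *\<^sub>R v)"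
    proof -
      have "w - z = (w - x) - \<gamma> *\<^sub>R v" unfolding x_def by simp
      then show ?thesis unfolding p_def by (metis norm_triangle_ineq4)
    qed
    also have "norm (\<gamma> *\<^sub>R v) < r / 2"
    proof -
      have "norm (\<gamma> *\<^sub>R v) = \<gamma> * norm v" using \<gamma> by simp
      also have "\<dots> \<le> \<gamma> * (norm v + 1)" using \<gamma> by simp
      also have "\<dots> < r / 2" using \<gamma>1(5) by (simp add: algebra_simps)
      finally show ?thesis .
    qed
    finally have wz: "norm (w - z) < r" using pr by linarith
    then have wb: "w \<in> ball z r" by (simp add: dist_norm norm_minus_commute)
    have wD: "w \<in> strict_feas c" using wb rL(3) by blast
    have Lg: "L \<le> \<alpha> / (2 * \<gamma>)" using \<gamma>1(3) \<gamma> rL(2) by (simp add: field_simps)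
    have zb: "z \<in> ball z r" using rL by simp
    have cc: "norm (?G w - ?G z) \<le> \<alpha> / \<gamma> * norm (w - z)"
    proof -
      have "norm (?G w - ?G z) \<le> L * norm (w - z)" using rL(4)[OF wb zb] .
      also have "\<dots> \<le> \<alpha> / \<gamma> * norm (w - z)"
      proof (rule mult_right_mono)
        have "\<alpha> / (2 * \<gamma>) \<le> \<alpha> / \<gamma>" using \<gamma> alpha by (simp add: frac_le)
        then show "L \<le> \<alpha> / \<gamma>" using Lg by linarith
      qed simp
      finally show ?thesis .
    qed
    define d where "d = w - z"
    have desc: "fm f b c \<mu> w \<le> fm f b c \<mu> z + v \<bullet> d + L * norm d ^ 2"
      unfolding v_def d_def
      by (rule descent[where r=r, OF fm_deriv[OF f_grad c_jac b_deriv] rL(4) rL(2) wb]) (use rL(3) in auto)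
    have wx: "w - x = d + \<gamma> *\<^sub>R v" unfolding d_def x_def by simp
    have "norm (w - x) ^ 2 / (2 * \<gamma>) = norm d ^ 2 / (2 * \<gamma>) + d \<bullet> v + \<gamma> * norm v ^ 2 / 2"
      unfolding wx norm_add_sq using \<gamma> by (simp add: field_simps power2_eq_square)
    then have pro: "gw + norm d ^ 2 / (2 * \<gamma>) + d \<bullet> v \<le> gz" using gw(2) zx by linarith
    have Ld: "L * norm d ^ 2 \<le> \<alpha> / (2 * \<gamma>) * norm d ^ 2" using mult_right_mono[OF Lg, of "norm d ^ 2"] by simp
    have eqa: "\<alpha> / (2 * \<gamma>) * norm d ^ 2 - norm d ^ 2 / (2 * \<gamma>) = - ((1 - \<alpha>) / (2 * \<gamma>) * norm d ^ 2)"
      using \<gamma>(1) by (simp add: field_simps)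
    have real_b: "fm f b c \<mu> w + gw \<le> fm f b c \<mu> z + gz - (1 - \<alpha>) / (2 * \<gamma>) * norm d ^ 2"
      using desc pro Ld eqa by (simp add: inner_commute)
    have qw: "qmu f g b c \<mu> w = ereal (fm f b c \<mu> w + gw)"
      using wD gw(1) unfolding qmu_def fm_def by simp
    have qz: "qmu f g b c \<mu> z = ereal (fm f b c \<mu> z + gz)"
      using z gz unfolding qmu_def fm_def by simp
    have bb: "qmu f g b c \<mu> w \<le> qmu f g b c \<mu> z - ereal ((1 - \<alpha>) / (2 * \<gamma>) * norm (w - z) ^ 2)"
      unfolding qw qz using real_b unfolding d_def by simp
    show ?thesis unfolding ipfb_accept_def using wD bb cc unfolding strict_feas_def by blast
  qed
  show ?thesis using that d0 main by blast
qed


theorem lemma3p4: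
  fixes f :: "real ^ 'n \<Rightarrow> real" and gradf :: "real ^ 'n \<Rightarrow> real ^ 'n"
    and g :: "real ^ 'n \<Rightarrow> ereal"
    and c :: "real ^ 'n \<Rightarrow> real ^ 'm" and Jc :: "real ^ 'n \<Rightarrow> real ^ 'n ^ 'm"
    and b db :: "real \<Rightarrow> real"
    and \<mu> \<epsilon> \<gamma>0 \<alpha> \<beta> :: real and z0 :: "real ^ 'n"
  assumes f_grad: "\<And>x. (f has_derivative (\<lambda>h. gradf x \<bullet> h)) (at x)"
    and f_lip: "loc_lipschitz gradf"
    and g_proper: "proper_fun g" and g_lsc: "lsc_fun g" and g_pb: "prox_bounded g"
    and g_cont: "cont_rel_dom g"
    and c_jac: "\<And>x. (c has_derivative (\<lambda>h. Jc x *v h)) (at x)"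
    and c_lip: "loc_lipschitz Jc"
    and q_inf: "\<bar>INF x\<in>{x. \<forall>i. c x $ i \<le> 0}. ereal (f x) + g x\<bar> \<noteq> \<infinity>"
    and F_ne: "edom (\<lambda>x. ereal (f x) + g x) \<inter> strict_feas c \<noteq> {}"
    and b_nonneg: "\<And>t. t < 0 \<Longrightarrow> b t \<ge> 0"
    and b_deriv: "\<And>t. t < 0 \<Longrightarrow> (b has_real_derivative db t) (at t)"
    and b_C2: "\<exists>ddb. (\<forall>t<0. (db has_real_derivative ddb t) (at t)) \<and> continuous_on {..<0} ddb"
    and db_pos: "\<And>t. t < 0 \<Longrightarrow> db t > 0"
    and b_lim: "filterlim b at_top (at_left 0)"
    and mu_pos: "\<mu> > 0" and eps_pos: "\<epsilon> > 0"
    and z0_F: "z0 \<in> edom (\<lambda>x. ereal (f x) + g x) \<inter> strict_feas c"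
    and gamma0: "\<gamma>0 > 0" "ereal \<gamma>0 < prox_threshold g"
    and alpha: "0 < \<alpha>" "\<alpha> < 1" and beta: "0 < \<beta>" "\<beta> < 1"
  shows
    \<comment> \<open>(i) backtracking from any point of F with any incoming stepsize in (0,\<gamma>0] is possible
        (T nonempty) and cannot go on forever\<close>
    "(\<forall>z \<in> edom (\<lambda>x. ereal (f x) + g x) \<inter> strict_feas c. \<forall>\<gamma>. 0 < \<gamma> \<and> \<gamma> \<le> \<gamma>0 \<longrightarrow>
        (\<forall>i::nat. Tmap g (gradfmu gradf db c Jc \<mu>) (\<beta> ^ i * \<gamma>) z \<noteq> {})
      \<and> \<not> (\<exists>w. \<forall>i::nat. w i \<in> Tmap g (gradfmu gradf db c Jc \<mu>) (\<beta> ^ i * \<gamma>) z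
                 \<and> \<not> ipfb_accept c (qmu f g b c \<mu>) (gradfmu gradf db c Jc \<mu>) \<alpha> (\<beta> ^ i * \<gamma>) z (w i)))
   \<and> (\<forall>N z zb \<gamma>. ipfb_run g c (qmu f g b c \<mu>) (gradfmu gradf db c Jc \<mu>) \<alpha> \<beta> \<gamma>0 \<epsilon> z0 N z zb \<gamma> \<longrightarrow>
        \<comment> \<open>(ii)\<close>
        (\<forall>j. 1 \<le> j \<and> j < N \<longrightarrow>
            z j = zb (j - 1)
          \<and> qmu f g b c \<mu> (z j) = qmu f g b c \<mu> (zb (j - 1))
          \<and> qmu f g b c \<mu> (zb (j - 1)) \<le> qmu f g b c \<mu> (z (j - 1))
               - ereal ((1 - \<alpha>) / (2 * \<gamma> (j - 1)) * norm (zb (j - 1) - z (j - 1)) ^ 2))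
        \<comment> \<open>(iii)\<close>
      \<and> (\<forall>j<N. qmu f g b c \<mu> (zb j) \<le> qmu f g b c \<mu> z0))
   \<and> qmu f g b c \<mu> z0 < \<infinity>"
proof -
  let ?G = "gradfmu gradf db c Jc \<mu>"
  let ?q = "qmu f g b c \<mu>"
  let ?F = "edom (\<lambda>x. ereal (f x) + g x) \<inter> strict_feas c"
  obtain s where s: "s \<in> {ereal \<gamma> | \<gamma>. \<gamma> > 0 \<and> prox_bdd_with g \<gamma>}" "ereal \<gamma>0 < s"
    using gamma0(2) unfolding prox_threshold_def by (auto simp: less_Sup_iff)
  then obtain \<gamma>1 where g1: "\<gamma>1 > 0" "prox_bdd_with g \<gamma>1" "\<gamma>0 < \<gamma>1" by auto
  have nm: "\<And>u. g u \<noteq> -\<infinity>" using g_proper unfolding proper_fun_def by blast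
  have gfin: "\<exists>gz. g z = ereal gz" if "z \<in> ?F" for z
  proof -
    have "ereal (f z) + g z < \<infinity>" using that unfolding edom_def by auto
    then have "g z \<noteq> \<infinity>" by auto
    then show ?thesis using nm[of z] by (cases "g z") auto
  qed
  have partI: "(\<forall>i::nat. Tmap g ?G (\<beta> ^ i * \<gamma>) z \<noteq> {})
      \<and> \<not> (\<exists>w. \<forall>i::nat. w i \<in> Tmap g ?G (\<beta> ^ i * \<gamma>) z
                 \<and> \<not> ipfb_accept c ?q ?G \<alpha> (\<beta> ^ i * \<gamma>) z (w i))"
    if z: "z \<in> ?F" and \<gamma>: "0 < \<gamma>" "\<gamma> \<le> \<gamma>0" for z \<gamma>
  proof
    have bi: "0 < \<beta> ^ i * \<gamma>" "\<beta> ^ i * \<gamma> \<le> \<gamma>" for i :: nat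
      using beta \<gamma> by (auto simp: mult_left_le_one_le power_le_one)
    show "\<forall>i::nat. Tmap g ?G (\<beta> ^ i * \<gamma>) z \<noteq> {}"
    proof
      fix i :: nat
      have "\<beta> ^ i * \<gamma> < \<gamma>1" using bi[of i] \<gamma> g1 by linarith
      then show "Tmap g ?G (\<beta> ^ i * \<gamma>) z \<noteq> {}"
        unfolding Tmap_def using prox_nonempty[OF g_proper g_lsc g1(2) bi(1)] by blast
    qed
    obtain gz where gz: "g z = ereal gz" using gfin[OF z] by blast
    have zD: "z \<in> strict_feas c" using z by blast
    obtain \<delta> where d: "\<delta> > 0"
      "\<And>\<gamma>' w. 0 < \<gamma>' \<Longrightarrow> \<gamma>' < \<delta> \<Longrightarrow> w \<in> Tmap g ?G \<gamma>' z \<Longrightarrow> ipfb_accept c ?q ?G \<alpha> \<gamma>' z w"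
      using accept_small[OF f_grad f_lip g_proper c_jac c_lip b_deriv b_C2 g1(2) g1(1) alpha zD gz,
          where \<mu>=\<mu>] by metis
    obtain n where n: "\<beta> ^ n < \<delta> / \<gamma>" using real_arch_pow_inv[of "\<delta> / \<gamma>" \<beta>] d(1) \<gamma> beta by auto
    then have "\<beta> ^ n * \<gamma> < \<delta>" using \<gamma> by (simp add: pos_less_divide_eq)
    then show "\<not> (\<exists>w. \<forall>i::nat. w i \<in> Tmap g ?G (\<beta> ^ i * \<gamma>) z
                 \<and> \<not> ipfb_accept c ?q ?G \<alpha> (\<beta> ^ i * \<gamma>) z (w i))"
      using d(2) bi(1) by blast
  qed
  have diff_le: "x - ereal t \<le> x" if "t \<ge> 0" for x :: ereal and t
    using that by (cases x) auto
  have partII: "(\<forall>j. 1 \<le> j \<and> j < N \<longrightarrow>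
            z j = zb (j - 1)
          \<and> ?q (z j) = ?q (zb (j - 1))
          \<and> ?q (zb (j - 1)) \<le> ?q (z (j - 1))
               - ereal ((1 - \<alpha>) / (2 * \<gamma> (j - 1)) * norm (zb (j - 1) - z (j - 1)) ^ 2))
      \<and> (\<forall>j<N. ?q (zb j) \<le> ?q z0)"
    if run: "ipfb_run g c ?q ?G \<alpha> \<beta> \<gamma>0 \<epsilon> z0 N z zb \<gamma>" for N z zb \<gamma>
  proof -
    have r0: "z 0 = z0" and r1: "\<And>j. Suc j < N \<Longrightarrow> z (Suc j) = zb j"
      and r2: "\<And>j. j < N \<Longrightarrow> \<exists>k::nat. \<gamma> j = \<beta> ^ k * (if j = 0 then \<gamma>0 else \<gamma> (j - 1))
        \<and> ipfb_accept c ?q ?G \<alpha> (\<gamma> j) (z j) (zb j)"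
      using run unfolding ipfb_run_def by blast+
    have gpos: "j < N \<Longrightarrow> \<gamma> j > 0" for j
    proof (induction j)
      case 0
      then obtain k where "\<gamma> 0 = \<beta> ^ k * \<gamma>0" using r2[of 0] by auto
      then show ?case using beta gamma0 by simp
    next
      case (Suc j)
      then obtain k where "\<gamma> (Suc j) = \<beta> ^ k * \<gamma> j" using r2[of "Suc j"] by auto
      then show ?case using beta Suc by simp
    qed
    have acc: "?q (zb j) \<le> ?q (z j) - ereal ((1 - \<alpha>) / (2 * \<gamma> j) * norm (zb j - z j) ^ 2)"
      if "j < N" for j
      using r2[OF that] unfolding ipfb_accept_def by blast
    have dec: "?q (zb j) \<le> ?q (z j)" if "j < N" for j
    proof -
      have "(1 - \<alpha>) / (2 * \<gamma> j) * norm (zb j - z j) ^ 2 \<ge> 0"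
        using gpos[OF that] alpha by simp
      then show ?thesis using acc[OF that] diff_le order_trans by blast
    qed
    have zle: "j < N \<Longrightarrow> ?q (z j) \<le> ?q z0" for j
    proof (induction j)
      case 0 then show ?case using r0 by simp
    next
      case (Suc j)
      then have "?q (z (Suc j)) = ?q (zb j)" using r1 by simp
      also have "\<dots> \<le> ?q (z j)" using dec Suc by simp
      also have "\<dots> \<le> ?q z0" using Suc by simp
      finally show ?case .
    qed
    show ?thesis
    proof (intro conjI allI impI)
      fix j assume j: "1 \<le> j \<and> j < N"
      then have js: "Suc (j - 1) < N" "j - 1 < N" by auto
      show zj: "z j = zb (j - 1)" using r1[OF js(1)] j by simp
      show "?q (z j) = ?q (zb (j - 1))" using zj by simp
      show "?q (zb (j - 1)) \<le> ?q (z (j - 1))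
               - ereal ((1 - \<alpha>) / (2 * \<gamma> (j - 1)) * norm (zb (j - 1) - z (j - 1)) ^ 2)"
        using acc[OF js(2)] .
    next
      fix j assume "j < N"
      then show "?q (zb j) \<le> ?q z0" using dec zle order_trans by blast
    qed
  qed
  have partIII: "?q z0 < \<infinity>"
  proof -
    obtain gz where "g z0 = ereal gz" using gfin[OF z0_F] by blast
    moreover have "z0 \<in> strict_feas c" using z0_F by blast
    ultimately show ?thesis unfolding qmu_def by simp
  qed
  show ?thesis using partI partII partIII by blast
qed

end
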